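(* For every $n\equiv 3\pmod 4$ with $n\ge 7$, there exists a Heffter array $H(n;3)$.
   Context: A Heffter array $H(n;k)$ is an $n\times n$ array in which some cells are filled with nonzero integers and the others are empty, such that: each row and each column contains exactly $k$ filled cells; the entries of every row and of every column sum to $0$ modulo $2nk+1$; and for each integer $1\le x\le nk$, exactly one of $x$ or $-x$ appears in the array, and it appears exactly once. *)

theory Defs
  imports Main
begin

text \<open>An n x n partially filled array is modelled as a function
  A :: nat => nat => int option, where A i j = None means cell (i,j) is empty;
  rows and columns are indexed by 0..n-1.\<close>

definition heffter_array :: "nat \<Rightarrow> nat \<Rightarrow> (nat \<Rightarrow> nat \<Rightarrow> int option) \<Rightarrow> bool" where
  "heffter_array n k A \<longleftrightarrow>
     (\<forall>i j. A i j \<noteq> None \<longrightarrow> i < n \<and> j < n) \<and>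
     (\<forall>i j x. A i j = Some x \<longrightarrow> x \<noteq> 0) \<and>
     (\<forall>i<n. card {j. j < n \<and> A i j \<noteq> None} = k) \<and>
     (\<forall>j<n. card {i. i < n \<and> A i j \<noteq> None} = k) \<and>
     (\<forall>i<n. (\<Sum>j\<in>{j. j < n \<and> A i j \<noteq> None}. the (A i j)) mod (2 * int n * int k + 1) = 0) \<and>
     (\<forall>j<n. (\<Sum>i\<in>{i. i < n \<and> A i j \<noteq> None}. the (A i j)) mod (2 * int n * int k + 1) = 0) \<and>
     (\<forall>x::int. 1 \<le> x \<and> x \<le> int (n * k) \<longrightarrow>
        (\<exists>!p. p \<in> {0..<n} \<times> {0..<n} \<and>
              (A (fst p) (snd p) = Some x \<or> A (fst p) (snd p) = Some (- x))))"

end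

theory Submission imports Defs begin

definition wv :: "nat \<Rightarrow> nat \<Rightarrow> int" where
 "wv t i = (if i = 0 then 12*int t+9
   else if i \<le> 2*t then (if odd i then -(3*int((i-1) div 2) + 1) else 12*int t - 3*int((i-2) div 2) + 2)
   else if i < 4*t then (if odd i then 3*int t + 3*int((i-2*t-1) div 2) + 2 else -(9*int t - 3*int((i-2*t-2) div 2) + 1))
   else if i = 4*t then 6*int t+5 else if i = 4*t+1 then -(6*int t+1) else 12*int t+5)"

definition vert :: "nat \<Rightarrow> nat \<Rightarrow> nat" where
 "vert t i = (if i \<le> 2*t then (if odd i then (i-1) div 2 else 4*t - (i-2) div 2)
   else if i < 4*t then (if odd i then t + (i-2*t-1) div 2 else 3*t - (i-2*t-2) div 2)
   else if i = 4*t then 2*t+1 else if i = 4*t+1 then 2*t else 4*t+1)"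

definition pos :: "nat \<Rightarrow> nat \<Rightarrow> nat" where
 "pos t j = (if j < t then 2*j+1 else if j < 2*t then 2*t+1+2*(j-t) else if j = 2*t then 4*t+1
    else if j = 2*t+1 then 4*t else if j \<le> 3*t then 2*t+2+2*(3*t-j) else if j \<le> 4*t then 2*(4*t-j)+2 else 4*t+2)"

lemma pieces: "1 \<le> (t::nat) \<Longrightarrow> i < 4*t+3 \<Longrightarrow> i = 0 \<or> (\<exists>a<t. i = 2*a+1) \<or> (\<exists>a<t. i = 2*a+2) \<or> (\<exists>a<t. i = 2*t+1+2*a)
   \<or> (\<exists>a. a+1<t \<and> i = 2*t+2+2*a) \<or> i = 4*t \<or> i = 4*t+1 \<or> i = 4*t+2"
  by presburger

lemma wA: "i = 2*a+1 \<Longrightarrow> a < t \<Longrightarrow> wv t i = -(3*int a+1) \<and> vert t i = a"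
  unfolding wv_def vert_def by simp
lemma wB: "i = 2*a+2 \<Longrightarrow> a < t \<Longrightarrow> wv t i = 12*int t - 3*int a + 2 \<and> vert t i = 4*t - a"
  unfolding wv_def vert_def by simp
lemma wC: "i = 2*t+1+2*a \<Longrightarrow> a < t \<Longrightarrow> wv t i = 3*int t + 3*int a + 2 \<and> vert t i = t + a"
  unfolding wv_def vert_def by simp
lemma wD: "i = 2*t+2+2*a \<Longrightarrow> a+1 < t \<Longrightarrow> wv t i = -(9*int t - 3*int a + 1) \<and> vert t i = 3*t - a"
  unfolding wv_def vert_def by simp
lemma wE: "i = 4*t \<Longrightarrow> 1 \<le> t \<Longrightarrow> wv t i = 6*int t+5 \<and> vert t i = 2*t+1"
  unfolding wv_def vert_def by simp
lemma wF: "i = 4*t+1 \<Longrightarrow> 1 \<le> t \<Longrightarrow> wv t i = -(6*int t+1) \<and> vert t i = 2*t"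
  unfolding wv_def vert_def by simp
lemma wG: "i = 4*t+2 \<Longrightarrow> 1 \<le> t \<Longrightarrow> wv t i = 12*int t+5 \<and> vert t i = 4*t+1"
  unfolding wv_def vert_def by simp
lemma w0: "wv t 0 = 12*int t+9"
  unfolding wv_def by simp

lemma wv_vert:
  assumes "1 \<le> t" "1 \<le> i" "i < 4*t+3"
  shows "(wv t i = 3*int(vert t i)+2 \<or> wv t i = -(3*int(vert t i)+1)) \<and> vert t i \<le> 4*t+1 \<and> pos t (vert t i) = i"
proof -
  consider "i = 0" | "(\<exists>a<t. i = 2*a+1)" | "(\<exists>a<t. i = 2*a+2)" | "(\<exists>a<t. i = 2*t+1+2*a)"
   | "(\<exists>a. a+1<t \<and> i = 2*t+2+2*a)" | "i = 4*t" | "i = 4*t+1" | "i = 4*t+2"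
    using pieces[OF assms(1) assms(3)] by blast
  then show ?thesis
  proof cases
    case 1 then show ?thesis using assms by simp
  next
    case 2 then obtain a where a: "a<t" "i = 2*a+1" by blast
    from wA[OF a(2) a(1)] show ?thesis using a by (simp add: pos_def; arith?)
  next
    case 3 then obtain a where a: "a<t" "i = 2*a+2" by blast
    from wB[OF a(2) a(1)] show ?thesis using a by (simp add: pos_def; arith?)
  next
    case 4 then obtain a where a: "a<t" "i = 2*t+1+2*a" by blast
    from wC[OF a(2) a(1)] show ?thesis using a by (simp add: pos_def; arith?)
  next
    case 5 then obtain a where a: "a+1<t" "i = 2*t+2+2*a" by blast
    from wD[OF a(2) a(1)] show ?thesis using a by (simp add: pos_def; arith?)
  next
    case 6 from wE[OF this assms(1)] show ?thesis using 6 assms by (simp add: pos_def; arith?)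
  next
    case 7 from wF[OF this assms(1)] show ?thesis using 7 assms by (simp add: pos_def; arith?)
  next
    case 8 from wG[OF this assms(1)] show ?thesis using 8 assms by (simp add: pos_def; arith?)
  qed
qed

definition prv :: "nat \<Rightarrow> nat \<Rightarrow> nat" where
 "prv t i = (if i = 0 then 4*t+2 else i - 1)"
definition sc :: "nat \<Rightarrow> nat \<Rightarrow> nat" where
 "sc t i = (if i = 4*t+2 then 0 else i + 1)"
definition qv :: "nat \<Rightarrow> nat \<Rightarrow> int" where
 "qv t i = 1 - wv t (prv t i) - wv t i + (if i = 0 then 24*int t + 19 else 0)"
definition lab :: "nat \<Rightarrow> nat \<Rightarrow> nat" where
 "lab t i = (if i = 0 then 2 else if i = 1 then 4*t+4 else if i = 2*t+1 then 4*t+2 else if i = 4*t then 4*t+1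
    else if i = 4*t+1 then 1 else if i = 4*t+2 then 2*t+1 else 4*t+2-i)"
definition labinv :: "nat \<Rightarrow> nat \<Rightarrow> nat" where
 "labinv t l = (if l = 2 then 0 else if l = 4*t+4 then 1 else if l = 4*t+2 then 2*t+1 else if l = 4*t+1 then 4*t
    else if l = 1 then 4*t+1 else if l = 2*t+1 then 4*t+2 else 4*t+2-l)"

lemma pieces2: "1 \<le> (t::nat) \<Longrightarrow> i < 4*t+3 \<Longrightarrow> i = 0 \<or> i = 1 \<or> (\<exists>a. a+1<t \<and> i = 2*a+3) \<or> (\<exists>a<t. i = 2*a+2) \<or> i = 2*t+1
   \<or> (\<exists>a. a+1<t \<and> i = 2*t+3+2*a) \<or> (\<exists>a. a+1<t \<and> i = 2*t+2+2*a) \<or> i = 4*t \<or> i = 4*t+1 \<or> i = 4*t+2"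
  by presburger

lemma qv1: "1 \<le> t \<Longrightarrow> qv t 1 = -(12*int t+7)"
proof -
  assume t: "1 \<le> t"
  have "wv t 1 = -1" using wA[of 1 0 t] t by simp
  then show ?thesis by (simp add: qv_def prv_def w0)
qed

lemma qv_lab:
  assumes t: "1 \<le> t" and i: "i < 4*t+3" "i \<noteq> 1"
  shows "(qv t i = 3*int(lab t i) \<or> qv t i = -(3*int(lab t i))) \<and> 1 \<le> lab t i \<and> lab t i \<le> 4*t+2 \<and> labinv t (lab t i) = i"
proof -
  consider "i = 0" | "i = 1" | "(\<exists>a. a+1<t \<and> i = 2*a+3)" | "(\<exists>a<t. i = 2*a+2)" | "i = 2*t+1"
   | "(\<exists>a. a+1<t \<and> i = 2*t+3+2*a)" | "(\<exists>a. a+1<t \<and> i = 2*t+2+2*a)" | "i = 4*t" | "i = 4*t+1" | "i = 4*t+2"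
    using pieces2[OF t i(1)] by blast
  then show ?thesis
  proof cases
    case 1
    have p: "prv t i = 4*t+2" using 1 by (simp add: prv_def)
    have w1: "wv t (prv t i) = 12*int t+5" using wG[OF p t] by simp
    show ?thesis using 1 w1 t by (simp add: qv_def lab_def labinv_def w0)
  next
    case 2 then show ?thesis using i by simp
  next
    case 3 then obtain a where a: "a+1<t" "i = 2*a+3" by blast
    have p: "prv t i = 2*a+2" using a by (simp add: prv_def)
    have w1: "wv t (prv t i) = 12*int t - 3*int a + 2" using wB[OF p] a by simp
    have w2: "wv t i = -(3*int (a+1)+1)" using wA[of i "a+1" t] a by simp
    show ?thesis using a w1 w2 t by (simp add: qv_def lab_def labinv_def; arith?)
  next
    case 4 then obtain a where a: "a<t" "i = 2*a+2" by blast
    have p: "prv t i = 2*a+1" using a by (simp add: prv_def)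
    have w1: "wv t (prv t i) = -(3*int a+1)" using wA[OF p] a by simp
    have w2: "wv t i = 12*int t - 3*int a + 2" using wB[of i a t] a by simp
    show ?thesis using a w1 w2 t by (simp add: qv_def lab_def labinv_def; arith?)
  next
    case 5
    have p: "prv t i = 2*(t-1)+2" using 5 t by (simp add: prv_def)
    have w1: "wv t (prv t i) = 12*int t - 3*int (t-1) + 2" using wB[OF p] t by simp
    have w2: "wv t i = 3*int t + 3*int 0 + 2" using wC[of i t 0] 5 t by simp
    show ?thesis using 5 w1 w2 t by (simp add: qv_def lab_def labinv_def of_nat_diff; arith?)
  next
    case 6 then obtain a where a: "a+1<t" "i = 2*t+3+2*a" by blast
    have p: "prv t i = 2*t+2+2*a" using a by (simp add: prv_def)
    have w1: "wv t (prv t i) = -(9*int t - 3*int a + 1)" using wD[OF p] a by simp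
    have w2: "wv t i = 3*int t + 3*int (a+1) + 2" using wC[of i t "a+1"] a by simp
    show ?thesis using a w1 w2 t by (simp add: qv_def lab_def labinv_def; arith?)
  next
    case 7 then obtain a where a: "a+1<t" "i = 2*t+2+2*a" by blast
    have p: "prv t i = 2*t+1+2*a" using a by (simp add: prv_def)
    have w1: "wv t (prv t i) = 3*int t + 3*int a + 2" using wC[OF p] a by simp
    have w2: "wv t i = -(9*int t - 3*int a + 1)" using wD[of i t a] a by simp
    show ?thesis using a w1 w2 t by (simp add: qv_def lab_def labinv_def; arith?)
  next
    case 8
    have p: "prv t i = 2*t+1+2*(t-1)" using 8 t by (simp add: prv_def)
    have w1: "wv t (prv t i) = 3*int t + 3*int (t-1) + 2" using wC[OF p] t by simp
    have w2: "wv t i = 6*int t+5" using wE[OF 8 t] by simp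
    show ?thesis using 8 w1 w2 t by (simp add: qv_def lab_def labinv_def of_nat_diff; arith?)
  next
    case 9
    have p: "prv t i = 4*t" using 9 t by (simp add: prv_def)
    have w1: "wv t (prv t i) = 6*int t+5" using wE[OF p t] by simp
    have w2: "wv t i = -(6*int t+1)" using wF[OF 9 t] by simp
    show ?thesis using 9 w1 w2 t by (simp add: qv_def lab_def labinv_def; arith?)
  next
    case 10
    have p: "prv t i = 4*t+1" using 10 t by (simp add: prv_def)
    have w1: "wv t (prv t i) = -(6*int t+1)" using wF[OF p t] by simp
    have w2: "wv t i = 12*int t+5" using wG[OF 10 t] by simp
    show ?thesis using 10 w1 w2 t by (simp add: qv_def lab_def labinv_def; arith?)
  qed
qed

lemma sc_lt: "i < 4*t+3 \<Longrightarrow> sc t i < 4*t+3" by (simp add: sc_def)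
lemma prv_lt: "i < 4*t+3 \<Longrightarrow> prv t i < 4*t+3" by (simp add: prv_def; arith?)
lemma prv_sc: "i < 4*t+3 \<Longrightarrow> prv t (sc t i) = i" by (simp add: prv_def sc_def; arith?)
lemma sc_prv: "i < 4*t+3 \<Longrightarrow> sc t (prv t i) = i" by (simp add: prv_def sc_def; arith?)
lemma sc_eq_iff: "i < 4*t+3 \<Longrightarrow> j < 4*t+3 \<Longrightarrow> (j = sc t i) = (i = prv t j)"
  by (auto simp add: prv_def sc_def)
lemma sc_ne1: "sc t i \<noteq> i" by (simp add: sc_def)
lemma sc_ne2: "i < 4*t+3 \<Longrightarrow> sc t (sc t i) \<noteq> i" by (simp add: sc_def)
lemma prv_ne1: "i < 4*t+3 \<Longrightarrow> prv t i \<noteq> i" by (simp add: prv_def; arith?)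
lemma prv_ne2: "i < 4*t+3 \<Longrightarrow> prv t (prv t i) \<noteq> i" by (simp add: prv_def; arith?)

definition arr :: "nat \<Rightarrow> nat \<Rightarrow> nat \<Rightarrow> int option" where
 "arr t i j = (if i < 4*t+3 \<and> j < 4*t+3 then
    (if j = i then Some (wv t (prv t i) - 1) else if j = sc t i then Some (qv t i)
     else if j = sc t (sc t i) then Some (wv t i) else None) else None)"

lemma row_set: "i < 4*t+3 \<Longrightarrow> {j. j < 4*t+3 \<and> arr t i j \<noteq> None} = {i, sc t i, sc t (sc t i)}"
  using sc_lt[of i t] sc_lt[of "sc t i" t] by (auto simp add: arr_def)

lemma col_set: "j < 4*t+3 \<Longrightarrow> {i. i < 4*t+3 \<and> arr t i j \<noteq> None} = {j, prv t j, prv t (prv t j)}"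
proof -
  assume j: "j < 4*t+3"
  have pj: "prv t j < 4*t+3" "prv t (prv t j) < 4*t+3" using prv_lt j by auto
  have "i \<in> {i. i < 4*t+3 \<and> arr t i j \<noteq> None} \<longleftrightarrow> i \<in> {j, prv t j, prv t (prv t j)}" for i
  proof
    assume "i \<in> {i. i < 4*t+3 \<and> arr t i j \<noteq> None}"
    then have i: "i < 4*t+3" and h: "j = i \<or> j = sc t i \<or> j = sc t (sc t i)"
      by (auto simp add: arr_def split: if_splits)
    from h show "i \<in> {j, prv t j, prv t (prv t j)}"
    proof (elim disjE)
      assume "j = sc t i" then show ?thesis using sc_eq_iff[OF i j] by simp
    next
      assume "j = sc t (sc t i)"
      then have "sc t i = prv t j" using sc_eq_iff[OF sc_lt[OF i] j] by simp
      then have "i = prv t (prv t j)" using sc_eq_iff[OF i pj(1)] by simp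
      then show ?thesis by simp
    qed simp
  next
    assume "i \<in> {j, prv t j, prv t (prv t j)}"
    then have "i = j \<or> i = prv t j \<or> i = prv t (prv t j)" by simp
    then show "i \<in> {i. i < 4*t+3 \<and> arr t i j \<noteq> None}"
    proof (elim disjE)
      assume "i = j" then show ?thesis using j by (simp add: arr_def)
    next
      assume ip: "i = prv t j"
      then have "j = sc t i" using sc_prv[OF j] by simp
      then show ?thesis using ip pj j by (simp add: arr_def)
    next
      assume ip: "i = prv t (prv t j)"
      then have "j = sc t (sc t i)" using sc_prv[OF j] sc_prv[OF pj(1)] by simp
      then show ?thesis using ip pj j by (simp add: arr_def)
    qed
  qed
  then show ?thesis by blast
qed

lemma row_sum: "i < 4*t+3 \<Longrightarrow> (\<Sum>j\<in>{i, sc t i, sc t (sc t i)}. the (arr t i j)) = (if i = 0 then 24*int t+19 else 0)"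
  using sc_lt[of i t] sc_lt[of "sc t i" t] sc_ne1[of t i] sc_ne2[of i t] sc_ne1[of t "sc t i"]
  by (simp add: arr_def qv_def)

lemma col_sum: "j < 4*t+3 \<Longrightarrow> (\<Sum>i\<in>{j, prv t j, prv t (prv t j)}. the (arr t i j)) = (if prv t j = 0 then 24*int t+19 else 0)"
proof -
  assume j: "j < 4*t+3"
  have pj: "prv t j < 4*t+3" "prv t (prv t j) < 4*t+3" using prv_lt j by auto
  have d: "j \<noteq> prv t j" "j \<noteq> prv t (prv t j)" "prv t j \<noteq> prv t (prv t j)"
    using prv_ne1[OF j] prv_ne2[OF j] prv_ne1[OF pj(1)] by auto
  have a1: "arr t j j = Some (wv t (prv t j) - 1)" using j by (simp add: arr_def)
  have a2: "arr t (prv t j) j = Some (qv t (prv t j))" using j pj d sc_prv[OF j] by (simp add: arr_def)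
  have a3: "arr t (prv t (prv t j)) j = Some (wv t (prv t (prv t j)))"
    using j pj d sc_prv[OF j] sc_prv[OF pj(1)] by (simp add: arr_def)
  show ?thesis using d a1 a2 a3 by (simp add: qv_def)
qed

definition cellf :: "nat \<Rightarrow> nat \<times> nat \<Rightarrow> nat \<times> nat" where
 "cellf t e = (if fst e = 0 then (sc t (snd e), sc t (snd e)) else if fst e = 1 then (snd e, sc t (snd e))
    else (snd e, sc t (sc t (snd e))))"
definition valf :: "nat \<Rightarrow> nat \<times> nat \<Rightarrow> int" where
 "valf t e = (if fst e = 0 then wv t (snd e) - 1 else if fst e = 1 then qv t (snd e) else wv t (snd e))"
definition dec :: "nat \<Rightarrow> int \<Rightarrow> nat \<times> nat" where
 "dec t c = (if c = 12*int t+9 then (2,0) else if c = 12*int t+8 then (0,0) else if c = 12*int t+7 then (1,1)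
   else if c mod 3 = 0 then (1, labinv t (nat (c div 3)))
   else (if \<bar>wv t (pos t (nat (c div 3)))\<bar> = c then 2 else 0, pos t (nat (c div 3))))"

lemma dec_val:
  assumes t: "1 \<le> t" and e: "e \<in> {0..<3} \<times> {0..<4*t+3}"
  shows "dec t \<bar>valf t e\<bar> = e \<and> 1 \<le> \<bar>valf t e\<bar> \<and> \<bar>valf t e\<bar> \<le> 12*int t+9"
proof -
  obtain d k where ek: "e = (d,k)" and d: "d < 3" and k: "k < 4*t+3" using e by auto
  show ?thesis
  proof (cases "d = 1")
    case True
    show ?thesis
    proof (cases "k = 1")
      case True
      then show ?thesis using `d = 1` ek qv1[OF t] by (simp add: valf_def dec_def)
    next
      case False
      from qv_lab[OF t k False] have q: "\<bar>qv t k\<bar> = 3*int (lab t k)" "1 \<le> lab t k" "lab t k \<le> 4*t+2" "labinv t (lab t k) = k"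
        by auto
      then show ?thesis using `d = 1` ek by (simp add: valf_def dec_def)
    qed
  next
    case False
    show ?thesis
    proof (cases "k = 0")
      case True
      then show ?thesis using `d \<noteq> 1` d ek by (auto simp add: valf_def dec_def w0)
    next
      case False
      then have k1: "1 \<le> k" by simp
      from wv_vert[OF t k1 k] have v: "wv t k = 3*int(vert t k)+2 \<or> wv t k = -(3*int(vert t k)+1)"
        "vert t k \<le> 4*t+1" "pos t (vert t k) = k" by auto
      have ab: "(\<bar>wv t k\<bar> = 3*int(vert t k)+2 \<and> \<bar>wv t k - 1\<bar> = 3*int(vert t k)+1) \<or>
                (\<bar>wv t k\<bar> = 3*int(vert t k)+1 \<and> \<bar>wv t k - 1\<bar> = 3*int(vert t k)+2)"
        using v(1) by auto
      have aux: "\<And>a v::int. a = 3*v+2 \<or> a = 3*v+1 \<Longrightarrow> a mod 3 \<noteq> 0 \<and> a div 3 = v" by presburger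
      have o1: "\<bar>wv t k\<bar> = 3*int(vert t k)+2 \<or> \<bar>wv t k\<bar> = 3*int(vert t k)+1" using ab by blast
      have o2: "\<bar>wv t k - 1\<bar> = 3*int(vert t k)+2 \<or> \<bar>wv t k - 1\<bar> = 3*int(vert t k)+1" using ab by blast
      have c1: "\<bar>wv t k\<bar> mod 3 \<noteq> 0 \<and> \<bar>wv t k\<bar> div 3 = int (vert t k)" by (rule aux[OF o1])
      have c2: "\<bar>wv t k - 1\<bar> mod 3 \<noteq> 0 \<and> \<bar>wv t k - 1\<bar> div 3 = int (vert t k)" by (rule aux[OF o2])
      have dv1: "\<bar>wv t k\<bar> div 3 = int (vert t k)" "\<bar>wv t k - 1\<bar> div 3 = int (vert t k)"
        using c1 c2 by simp_all
      have dv2b: "\<bar>wv t k\<bar> \<noteq> \<bar>wv t k - 1\<bar>" using ab by linarith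
      note dv2 = c1 c2 dv2b
      have bnd: "1 \<le> \<bar>wv t k\<bar>" "\<bar>wv t k\<bar> \<le> 12*int t+5" "1 \<le> \<bar>wv t k - 1\<bar>" "\<bar>wv t k - 1\<bar> \<le> 12*int t+5"
        using v(1,2) by auto
      show ?thesis
      proof (cases "d = 0")
        case True
        then show ?thesis using ek dv1 dv2 bnd v(3) by (simp add: valf_def dec_def)
      next
        case False
        then have "d = 2" using d `d \<noteq> 1` by simp
        then show ?thesis using ek dv1 dv2 bnd v(3) by (simp add: valf_def dec_def)
      qed
    qed
  qed
qed

lemma arr_val:
  assumes "arr t i j = Some x"
  shows "\<exists>e\<in>{0..<3} \<times> {0..<4*t+3}. cellf t e = (i,j) \<and> x = valf t e"
proof -
  have i: "i < 4*t+3" and j: "j < 4*t+3" using assms by (auto simp add: arr_def split: if_splits)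
  have "(j = i \<and> x = wv t (prv t i) - 1) \<or> (j = sc t i \<and> x = qv t i) \<or> (j = sc t (sc t i) \<and> x = wv t i)"
    using assms by (auto simp add: arr_def split: if_splits)
  then show ?thesis
  proof (elim disjE conjE)
    assume "j = i" "x = wv t (prv t i) - 1"
    then show ?thesis using i prv_lt[OF i] sc_prv[OF i]
      by (intro bexI[of _ "(0, prv t i)"]) (auto simp add: cellf_def valf_def)
  next
    assume "j = sc t i" "x = qv t i"
    then show ?thesis using i
      by (intro bexI[of _ "(1, i)"]) (auto simp add: cellf_def valf_def)
  next
    assume "j = sc t (sc t i)" "x = wv t i"
    then show ?thesis using i
      by (intro bexI[of _ "(2, i)"]) (auto simp add: cellf_def valf_def)
  qed
qed

lemma cell_val:
  assumes e: "e \<in> {0..<3} \<times> {0..<4*t+3}"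
  shows "fst (cellf t e) < 4*t+3 \<and> snd (cellf t e) < 4*t+3 \<and> arr t (fst (cellf t e)) (snd (cellf t e)) = Some (valf t e)"
proof -
  obtain d k where ek: "e = (d,k)" and d: "d < 3" and k: "k < 4*t+3" using e by auto
  have s1: "sc t k < 4*t+3" "sc t (sc t k) < 4*t+3" using sc_lt k by auto
  consider "d = 0" | "d = 1" | "d = 2" using d by linarith
  then show ?thesis
  proof cases
    case 1 then show ?thesis using ek s1 prv_sc[OF k] by (simp add: cellf_def valf_def arr_def)
  next
    case 2 then show ?thesis using ek s1 k sc_ne1[of t k] by (simp add: cellf_def valf_def arr_def)
  next
    case 3 then show ?thesis using ek s1 k sc_ne1[of t "sc t k"] sc_ne2[OF k] by (simp add: cellf_def valf_def arr_def)
  qed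
qed

lemma main:
  assumes t: "1 \<le> t"
  shows "heffter_array (4*t+3) 3 (arr t)"
proof -
  let ?n = "4*t+3"
  let ?D = "{0..<(3::nat)} \<times> {0..<4*t+3}"
  let ?f = "\<lambda>e. \<bar>valf t e\<bar>"
  have M: "2 * int (4*t+3) * int 3 + 1 = 24*int t+19" by simp
  have c1: "\<forall>i j. arr t i j \<noteq> None \<longrightarrow> i < ?n \<and> j < ?n" by (simp add: arr_def)
  have c2: "\<forall>i j x. arr t i j = Some x \<longrightarrow> x \<noteq> 0"
  proof (intro allI impI)
    fix i j x assume "arr t i j = Some x"
    then obtain e where e: "e \<in> ?D" "x = valf t e" using arr_val by blast
    have "1 \<le> \<bar>valf t e\<bar>" using dec_val[OF t e(1)] by blast
    then show "x \<noteq> 0" using e(2) by auto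
  qed
  have c3: "\<forall>i<?n. card {j. j < ?n \<and> arr t i j \<noteq> None} = 3"
  proof (intro allI impI)
    fix i assume i: "i < ?n"
    show "card {j. j < ?n \<and> arr t i j \<noteq> None} = 3"
      using row_set[OF i] sc_ne1[of t i] sc_ne2[OF i] sc_ne1[of t "sc t i"] by simp
  qed
  have c4: "\<forall>j<?n. card {i. i < ?n \<and> arr t i j \<noteq> None} = 3"
  proof (intro allI impI)
    fix j assume j: "j < ?n"
    show "card {i. i < ?n \<and> arr t i j \<noteq> None} = 3"
      using col_set[OF j] prv_ne1[OF j] prv_ne2[OF j] prv_ne1[OF prv_lt[OF j]] by auto
  qed
  have c5: "\<forall>i<?n. (\<Sum>j\<in>{j. j < ?n \<and> arr t i j \<noteq> None}. the (arr t i j)) mod (2 * int ?n * int 3 + 1) = 0"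
  proof (intro allI impI)
    fix i assume i: "i < ?n"
    show "(\<Sum>j\<in>{j. j < ?n \<and> arr t i j \<noteq> None}. the (arr t i j)) mod (2 * int ?n * int 3 + 1) = 0"
      unfolding M row_set[OF i] row_sum[OF i] by simp
  qed
  have c6: "\<forall>j<?n. (\<Sum>i\<in>{i. i < ?n \<and> arr t i j \<noteq> None}. the (arr t i j)) mod (2 * int ?n * int 3 + 1) = 0"
  proof (intro allI impI)
    fix j assume j: "j < ?n"
    show "(\<Sum>i\<in>{i. i < ?n \<and> arr t i j \<noteq> None}. the (arr t i j)) mod (2 * int ?n * int 3 + 1) = 0"
      unfolding M col_set[OF j] col_sum[OF j] by simp
  qed
  have inj: "inj_on ?f ?D"
    by (rule inj_on_inverseI[where g = "dec t"]) (use dec_val[OF t] in blast)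
  have sub: "?f ` ?D \<subseteq> {1..12*int t+9}"
  proof
    fix y assume "y \<in> ?f ` ?D"
    then obtain e where e: "e \<in> ?D" "y = ?f e" by blast
    show "y \<in> {1..12*int t+9}" using dec_val[OF t e(1)] e(2) by simp
  qed
  have cD: "card ?D = 12*t+9" by simp
  have cI: "card {1..12*int t+9} = 12*t+9" by simp
  have img: "?f ` ?D = {1..12*int t+9}"
    using card_subset_eq[OF _ sub] card_image[OF inj] cD cI by simp
  have c7: "\<forall>x::int. 1 \<le> x \<and> x \<le> int (?n * 3) \<longrightarrow>
        (\<exists>!p. p \<in> {0..<?n} \<times> {0..<?n} \<and> (arr t (fst p) (snd p) = Some x \<or> arr t (fst p) (snd p) = Some (- x)))"
  proof (intro allI impI)
    fix x :: int assume x: "1 \<le> x \<and> x \<le> int (?n * 3)"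
    then have "x \<in> {1..12*int t+9}" by simp
    then have "x \<in> ?f ` ?D" using img by simp
    then obtain e where ex: "x = ?f e" "e \<in> ?D" by (rule imageE)
    then have e: "e \<in> ?D" "\<bar>valf t e\<bar> = x" by simp_all
    have cv: "fst (cellf t e) < ?n" "snd (cellf t e) < ?n" "arr t (fst (cellf t e)) (snd (cellf t e)) = Some (valf t e)"
      using cell_val[OF e(1)] by auto
    show "\<exists>!p. p \<in> {0..<?n} \<times> {0..<?n} \<and> (arr t (fst p) (snd p) = Some x \<or> arr t (fst p) (snd p) = Some (- x))"
    proof (rule ex1I[of _ "cellf t e"])
      show "cellf t e \<in> {0..<?n} \<times> {0..<?n} \<and> (arr t (fst (cellf t e)) (snd (cellf t e)) = Some x \<or> arr t (fst (cellf t e)) (snd (cellf t e)) = Some (- x))"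
      proof -
        have "valf t e = x \<or> valf t e = - x" using e(2) by linarith
        moreover have "cellf t e \<in> {0..<?n} \<times> {0..<?n}" using cv(1,2) by (simp add: mem_Times_iff)
        ultimately show ?thesis using cv(3) by auto
      qed
    next
      fix p assume p: "p \<in> {0..<?n} \<times> {0..<?n} \<and> (arr t (fst p) (snd p) = Some x \<or> arr t (fst p) (snd p) = Some (- x))"
      then obtain y where y: "arr t (fst p) (snd p) = Some y" "y = x \<or> y = -x" by blast
      from arr_val[OF y(1)] obtain e' where e': "e' \<in> ?D" "cellf t e' = (fst p, snd p)" "y = valf t e'" by blast
      have "?f e' = ?f e" using y(2) e'(3) e(2) x by (elim disjE) simp_all
      then have "e' = e" using inj e'(1) e(1) by (meson inj_onD)
      then show "p = cellf t e" using e'(2) by simp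
    qed
  qed
  show ?thesis unfolding heffter_array_def
    by (rule conjI[OF c1 conjI[OF c2 conjI[OF c3 conjI[OF c4 conjI[OF c5 conjI[OF c6 c7]]]]]])
qed

theorem lemma4p1:
  fixes n :: nat
  assumes "n mod 4 = 3" and "n \<ge> 7"
  shows "\<exists>A. heffter_array n 3 A"
proof -
  define t where "t = n div 4"
  have n: "n = 4*t+3" using assms(1) unfolding t_def by arith
  have t: "1 \<le> t" using n assms(2) by arith
  show ?thesis using main[OF t] n by blast
qed

end
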